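(* Let $\mathbf P=UV^\top$ be the transition matrix of a Markov chain on $\{1,\dots,p\}$ with stationary distribution $\pi$ having all entries positive, where $U,V\in\mathbb R^{p\times r}$ are entrywise nonnegative with $U\mathbf 1_r=\mathbf 1_p$, $V^\top\mathbf 1_p=\mathbf 1_r$, each meta-state has an anchor state, and $\mathrm{rank}(U)=r$. Let $\mathbf H=[\mathbf h_1,\dots,\mathbf h_r]$ contain the right singular vectors of $\mathbf Q=\mathrm{diag}(\pi)\mathbf P[\mathrm{diag}(\pi)]^{-1/2}$ associated with its nonzero singular values, assume $\mathbf h_1$ has all coordinates positive, let $\mathbf D=[\mathrm{diag}(\mathbf h_1)]^{-1}[\mathbf h_2,\dots,\mathbf h_r]$ with rows $\mathbf d_1^\top,\dots,\mathbf d_p^\top$, let $\mathbf L\in\mathbb R^{r\times r}$ be the invertible matrix with $\mathbf H=[\mathrm{diag}(\pi)]^{-1/2}V\mathbf L$, with columns $\mathbf l_1,\dots,\mathbf l_r$, and let $\mathbf b_1^\top,\dots,\mathbf b_r^\top$ be the rows of $[\mathrm{diag}(\mathbf l_1)]^{-1}[\mathbf l_2,\dots,\mathbf l_r]$ (the vertices of the simplex $\mathcal S_0^*$ containing all $\mathbf d_j$). Then each row of $\mathbf D$ is a convex combination of $\mathbf b_1,\dots,\mathbf b_r$: for each $j$ there is a unique $\mathbf w_j$ in the standard simplex of $\mathbb R^r$ with $\mathbf d_j=\sum_{k=1}^r\mathbf w_j(k)\mathbf b_k$. Furthermore, the matrix $W\in\mathbb R^{p\times r}$ whose $j$-th row is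 $\mathbf w_j^\top$ satisfies $$[\mathrm{diag}(\mathbf h_1)][\mathrm{diag}(\pi)]^{1/2}W=V[\mathrm{diag}(\mathbf l_1)].$$
   Context: A state $j$ is an anchor state of meta-state $k$ if $V_{jk}>0$ and $V_{js}=0$ for all $s\neq k$. The standard simplex of $\mathbb R^r$ is $\{\mathbf w\in\mathbb R^r:\mathbf w\ge0,\ \sum_k\mathbf w(k)=1\}$. *)

theory Defs
  imports "Jordan_Normal_Form.DL_Rank"
begin

definition diag_of_vec :: "real vec \<Rightarrow> real mat" where
  "diag_of_vec v = mat (dim_vec v) (dim_vec v) (\<lambda>(i,j). if i = j then v $ i else 0)"

definition std_simplex :: "nat \<Rightarrow> real vec set" where
  "std_simplex r = {w \<in> carrier_vec r. (\<forall>k<r. w $ k \<ge> 0) \<and> (\<Sum>k<r. w $ k) = 1}"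

definition anchor_state :: "real mat \<Rightarrow> nat \<Rightarrow> nat \<Rightarrow> bool" where
  "anchor_state V j k \<longleftrightarrow> V $$ (j,k) > 0 \<and> (\<forall>s<dim_col V. s \<noteq> k \<longrightarrow> V $$ (j,s) = 0)"

text \<open>Compact SVD data: the columns of H (p x r) are right singular vectors of Q
  associated with its nonzero singular values, i.e. Q = G diag(sigma) H^T with
  G, H having orthonormal columns and sigma > 0.\<close>
definition right_sing_vecs_nonzero :: "nat \<Rightarrow> nat \<Rightarrow> real mat \<Rightarrow> real mat \<Rightarrow> bool" where
  "right_sing_vecs_nonzero p r Q H \<longleftrightarrow>
     H \<in> carrier_mat p r \<and> H\<^sup>T * H = 1\<^sub>m r \<and>
     (\<exists>G \<sigma>. G \<in> carrier_mat p r \<and> G\<^sup>T * G = 1\<^sub>m r \<and> \<sigma> \<in> carrier_vec r \<and>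
        (\<forall>k<r. \<sigma> $ k > 0) \<and> Q = G * diag_of_vec \<sigma> * H\<^sup>T)"

end

theory Submission
  imports Defs
begin

lemma diag_mult:
  assumes "A \<in> carrier_mat n m" "v \<in> carrier_vec n"
  shows "diag_of_vec v * A = mat n m (\<lambda>(i,j). v$i * A$$(i,j))"
proof (rule eq_matI)
  fix i j assume ij: "i < dim_row (mat n m (\<lambda>(i,j). v$i * A$$(i,j)))" "j < dim_col (mat n m (\<lambda>(i,j). v$i * A$$(i,j)))"
  have "(\<Sum>t\<in>{0..<n}. (if i = t then v $ i else 0) * A $$ (t, j)) = v$i * A$$(i,j)"
  proof -
    have "(\<Sum>t\<in>{0..<n}. (if i = t then v $ i else 0) * A $$ (t, j)) = (\<Sum>t\<in>{0..<n}. if t = i then v$i * A$$(i,j) else 0)"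
      by (rule sum.cong) auto
    then show ?thesis using ij by simp
  qed
  then show "(diag_of_vec v * A) $$ (i, j) = mat n m (\<lambda>(i,j). v$i * A$$(i,j)) $$ (i, j)"
    using ij assms by (simp add: diag_of_vec_def index_mult_mat scalar_prod_def row_def col_def)
qed (use assms in \<open>auto simp: diag_of_vec_def\<close>)

lemma mult_diag:
  assumes "A \<in> carrier_mat n m" "v \<in> carrier_vec m"
  shows "A * diag_of_vec v = mat n m (\<lambda>(i,j). A$$(i,j) * v$j)"
proof (rule eq_matI)
  fix i j assume ij: "i < dim_row (mat n m (\<lambda>(i,j). A$$(i,j) * v$j))" "j < dim_col (mat n m (\<lambda>(i,j). A$$(i,j) * v$j))"
  have "(\<Sum>t\<in>{0..<m}. A $$ (i, t) * (if t = j then v $ t else 0)) = A$$(i,j) * v$j"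
  proof -
    have "(\<Sum>t\<in>{0..<m}. A $$ (i, t) * (if t = j then v $ t else 0)) = (\<Sum>t\<in>{0..<m}. if t = j then A$$(i,j) * v$j else 0)"
      by (rule sum.cong) auto
    then show ?thesis using ij by simp
  qed
  then show "(A * diag_of_vec v) $$ (i, j) = mat n m (\<lambda>(i,j). A$$(i,j) * v$j) $$ (i, j)"
    using ij assms by (simp add: diag_of_vec_def index_mult_mat scalar_prod_def row_def col_def)
qed (use assms in \<open>auto simp: diag_of_vec_def\<close>)

lemma invertible_transpose_kernel:
  fixes L :: "real mat"
  assumes "L \<in> carrier_mat r r" "invertible_mat L" "z \<in> carrier_vec r" "L\<^sup>T *\<^sub>v z = 0\<^sub>v r"
  shows "z = 0\<^sub>v r"
proof -
  obtain M where M: "L * M = 1\<^sub>m r" "M * L = 1\<^sub>m (dim_row M)"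
    using assms(1,2) unfolding invertible_mat_def inverts_mat_def by auto
  have Mc: "M \<in> carrier_mat r r"
  proof -
    have "dim_col (L * M) = r" using M(1) by simp
    then have c: "dim_col M = r" by simp
    have "dim_col (M * L) = dim_row M" using M(2) by simp
    then have "dim_row M = r" using assms(1) by simp
    with c show ?thesis by auto
  qed
  have "M\<^sup>T * L\<^sup>T = 1\<^sub>m r"
    using M Mc assms(1) by (metis transpose_mult transpose_one)
  then have "z = (M\<^sup>T * L\<^sup>T) *\<^sub>v z" using assms(3) by simp
  also have "\<dots> = M\<^sup>T *\<^sub>v (L\<^sup>T *\<^sub>v z)" using Mc assms by (simp add: assoc_mult_mat_vec)
  also have "\<dots> = 0\<^sub>v r" using assms Mc by auto
  finally show ?thesis .
qed
theorem mainTheorem15: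
  fixes p r :: nat and U V P Q H L D B :: "real mat" and \<pi> :: "real vec"
  assumes U_dim: "U \<in> carrier_mat p r" and V_dim: "V \<in> carrier_mat p r"
    and U_nonneg: "\<forall>i<p. \<forall>k<r. U $$ (i,k) \<ge> 0"
    and V_nonneg: "\<forall>i<p. \<forall>k<r. V $$ (i,k) \<ge> 0"
    and U_rows: "U *\<^sub>v vec r (\<lambda>_. 1) = vec p (\<lambda>_. 1)"
    and V_cols: "V\<^sup>T *\<^sub>v vec p (\<lambda>_. 1) = vec r (\<lambda>_. 1)"
    and P_def: "P = U * V\<^sup>T"
    and pi_dim: "\<pi> \<in> carrier_vec p"
    and pi_pos: "\<forall>i<p. \<pi> $ i > 0"
    and pi_sum: "(\<Sum>i<p. \<pi> $ i) = 1"
    and pi_stat: "P\<^sup>T *\<^sub>v \<pi> = \<pi>"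
    and anchors: "\<forall>k<r. \<exists>j<p. anchor_state V j k"
    and rank_U: "vec_space.rank p U = r"
    and Q_def: "Q = diag_of_vec \<pi> * P * diag_of_vec (map_vec (\<lambda>x. inverse (sqrt x)) \<pi>)"
    and H_svd: "right_sing_vecs_nonzero p r Q H"
    and h1_pos: "\<forall>i<p. H $$ (i,0) > 0"
    and D_def: "D = diag_of_vec (map_vec inverse (col H 0)) * mat p (r - 1) (\<lambda>(i,m). H $$ (i, m + 1))"
    and L_dim: "L \<in> carrier_mat r r" and L_inv: "invertible_mat L"
    and H_eq: "H = diag_of_vec (map_vec (\<lambda>x. inverse (sqrt x)) \<pi>) * V * L"
    and B_def: "B = diag_of_vec (map_vec inverse (col L 0)) * mat r (r - 1) (\<lambda>(k,m). L $$ (k, m + 1))"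
  shows "(\<forall>j<p. \<exists>!w. w \<in> std_simplex r \<and> row D j = B\<^sup>T *\<^sub>v w)
    \<and> (\<forall>W \<in> carrier_mat p r. (\<forall>j<p. row W j \<in> std_simplex r \<and> row D j = B\<^sup>T *\<^sub>v row W j) \<longrightarrow>
         diag_of_vec (col H 0) * diag_of_vec (map_vec sqrt \<pi>) * W = V * diag_of_vec (col L 0))"
  proof -
  have Hc: "H \<in> carrier_mat p r" using H_svd unfolding right_sing_vecs_nonzero_def by auto
  have Vr: "dim_col V = r" "dim_row V = p" using V_dim by auto
  have Lr: "dim_col L = r" "dim_row L = r" using L_dim by auto
  have rpos: "0 < r" if "j < p" for j
  proof (rule ccontr)
    assume "\<not> 0 < r" then have "r = 0" by simp
    have "(U *\<^sub>v vec r (\<lambda>_. 1)) $ j = row U j \<bullet> vec r (\<lambda>_. 1)"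
      using that U_dim by simp
    also have "\<dots> = 0" using \<open>r = 0\<close> by (simp add: scalar_prod_def)
    finally show False using U_rows that by simp
  qed
  define c' where "c' i m = (\<Sum>s\<in>{0..<r}. V$$(i,s) * L$$(s,m))" for i m
  define c where "c i = c' i 0" for i
  have sqpos: "sqrt (\<pi>$i) > 0" if "i < p" for i using pi_pos that by simp
  have DV: "diag_of_vec (map_vec (\<lambda>x. inverse (sqrt x)) \<pi>) * V
      = mat p r (\<lambda>(i,j). inverse (sqrt (\<pi>$i)) * V$$(i,j))"
    using diag_mult[OF V_dim, of "map_vec (\<lambda>x. inverse (sqrt x)) \<pi>"] pi_dim
    by (auto intro!: eq_matI)
  have H_entry: "H$$(i,m) = inverse (sqrt (\<pi>$i)) * c' i m" if "i < p" "m < r" for i m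
  proof -
    have "H$$(i,m) = row (mat p r (\<lambda>(i,j). inverse (sqrt (\<pi>$i)) * V$$(i,j))) i \<bullet> col L m"
      using that H_eq DV Lr by (simp add: index_mult_mat)
    also have "\<dots> = (\<Sum>s\<in>{0..<r}. inverse (sqrt (\<pi>$i)) * V$$(i,s) * L$$(s,m))"
      using that Lr by (simp add: scalar_prod_def)
    also have "\<dots> = inverse (sqrt (\<pi>$i)) * c' i m"
      unfolding c'_def by (simp add: sum_distrib_left mult.assoc)
    finally show ?thesis .
  qed
  have cpos: "c j > 0" if "j < p" for j
  proof -
    have "0 < H$$(j,0)" using h1_pos that by simp
    also have "H$$(j,0) = inverse (sqrt (\<pi>$j)) * c j"
      using H_entry[OF that rpos[OF that]] c_def by simp
    finally show ?thesis using sqpos[OF that] by (simp add: zero_less_mult_iff)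
  qed
  have Lpos: "L$$(k,0) > 0" if kr: "k < r" for k
  proof -
    obtain j where j: "j < p" "anchor_state V j k" using anchors kr by auto
    have "c j = (\<Sum>s\<in>{0..<r}. if s = k then V$$(j,k) * L$$(k,0) else 0)"
      unfolding c_def c'_def
      by (rule sum.cong) (use j Vr in \<open>auto simp: anchor_state_def\<close>)
    also have "\<dots> = V$$(j,k) * L$$(k,0)" using that by simp
    finally have "V$$(j,k) * L$$(k,0) > 0" using cpos[OF j(1)] by simp
    moreover have "V$$(j,k) > 0" using j unfolding anchor_state_def by auto
    ultimately show ?thesis by (simp add: zero_less_mult_iff)
  qed
  have Dm: "D = mat p (r-1) (\<lambda>(i,m). inverse (col H 0 $ i) * H $$ (i, m + 1))"
    unfolding D_def
    by (subst diag_mult[of _ p "r-1"]) (use Hc in auto)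
  have Lnz: "L$$(k,0) \<noteq> 0" if "k < r" for k using Lpos[OF that] by simp
  have D_entry: "D$$(j,m) = c' j (m+1) / c j" if "j < p" "m < r - 1" for j m
  proof -
    have "D$$(j,m) = inverse (H$$(j,0)) * H$$(j,m+1)" using that Hc by (simp add: Dm)
    also have "\<dots> = c' j (m+1) / c j"
    proof -
      have e0: "H$$(j,0) = inverse (sqrt (\<pi>$j)) * c j"
        using H_entry[of j 0] that rpos[OF that(1)] c_def by simp
      have e1: "H$$(j,m+1) = inverse (sqrt (\<pi>$j)) * c' j (m+1)"
        using H_entry[of j "m+1"] that by simp
      show ?thesis unfolding e0 e1 using sqpos[OF that(1)] by (simp add: field_simps)
    qed
    finally show ?thesis .
  qed
  have Dc: "D \<in> carrier_mat p (r-1)" by (simp add: Dm)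
  have Bm: "B = mat r (r-1) (\<lambda>(k,m). inverse (col L 0 $ k) * L $$ (k, m + 1))"
    unfolding B_def
    by (subst diag_mult[of _ r "r-1"]) (use L_dim in auto)
  have B_entry: "B$$(k,m) = L$$(k,m+1) / L$$(k,0)" if "k < r" "m < r - 1" for k m
  proof -
    show ?thesis using that L_dim by (simp add: Bm field_simps)
  qed
  have Bc: "B \<in> carrier_mat r (r-1)" by (simp add: Bm)
  have BTw: "(B\<^sup>T *\<^sub>v w) $ m = (\<Sum>k\<in>{0..<r}. L$$(k,m+1) / L$$(k,0) * w$k)"
    if "w \<in> carrier_vec r" "m < r - 1" for w m
  proof -
    have "(B\<^sup>T *\<^sub>v w) $ m = col B m \<bullet> w" using that Bc by simp
    also have "\<dots> = (\<Sum>k\<in>{0..<r}. B$$(k,m) * w$k)" using that Bc by (simp add: scalar_prod_def)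
    also have "\<dots> = (\<Sum>k\<in>{0..<r}. L$$(k,m+1) / L$$(k,0) * w$k)"
      by (rule sum.cong) (use B_entry that in auto)
    finally show ?thesis .
  qed
  define wv where "wv j = vec r (\<lambda>k. V$$(j,k) * L$$(k,0) / c j)" for j
  have wv_simp: "wv j \<in> std_simplex r" if "j < p" for j
  proof -
    have "(\<Sum>k<r. wv j $ k) = (\<Sum>k\<in>{0..<r}. V$$(j,k) * L$$(k,0) / c j)"
      unfolding wv_def atLeast0LessThan by simp
    also have "\<dots> = c j / c j" by (simp only: c_def c'_def sum_divide_distrib)
    also have "\<dots> = 1" using cpos[OF that] by simp
    moreover have "0 \<le> V$$(j,k) * L$$(k,0) / c j" if "k < r" for k
      using V_nonneg less_imp_le[OF Lpos[OF that]] cpos[OF \<open>j < p\<close>] \<open>j < p\<close> that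
      by (intro divide_nonneg_pos mult_nonneg_nonneg) auto
    ultimately show ?thesis unfolding std_simplex_def wv_def by auto
  qed
  have wv_eq: "row D j = B\<^sup>T *\<^sub>v wv j" if "j < p" for j
  proof (rule eq_vecI)
    show "dim_vec (row D j) = dim_vec (B\<^sup>T *\<^sub>v wv j)" using Dc Bc by simp
    fix m assume "m < dim_vec (B\<^sup>T *\<^sub>v wv j)"
    then have m: "m < r - 1" using Bc by simp
    have "(B\<^sup>T *\<^sub>v wv j) $ m = (\<Sum>k\<in>{0..<r}. L$$(k,m+1) / L$$(k,0) * (V$$(j,k) * L$$(k,0) / c j))"
      using BTw[OF _ m, of "wv j"] unfolding wv_def by simp
    also have "\<dots> = (\<Sum>k\<in>{0..<r}. V$$(j,k) * L$$(k,m+1) / c j)"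
      by (rule sum.cong) (auto simp: Lnz field_simps)
    also have "\<dots> = c' j (m+1) / c j" unfolding c'_def by (simp add: sum_divide_distrib)
    also have "\<dots> = row D j $ m" using D_entry[OF that m] Dc m that by simp
    finally show "row D j $ m = (B\<^sup>T *\<^sub>v wv j) $ m" by simp
  qed
  have uniq: "w = wv j" if j: "j < p" and w: "w \<in> std_simplex r" "row D j = B\<^sup>T *\<^sub>v w" for j w
  proof -
    have wc: "w \<in> carrier_vec r" and wvc: "wv j \<in> carrier_vec r"
      using w(1) wv_simp[OF j] unfolding std_simplex_def by auto
    define z where "z = vec r (\<lambda>k. (w$k - wv j$k) / L$$(k,0))"
    have zc: "z \<in> carrier_vec r" unfolding z_def by simp
    have Lz: "L\<^sup>T *\<^sub>v z = 0\<^sub>v r"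
    proof (rule eq_vecI)
      show "dim_vec (L\<^sup>T *\<^sub>v z) = dim_vec (0\<^sub>v r)" using L_dim by simp
      fix i assume "i < dim_vec (0\<^sub>v r)"
      then have i: "i < r" by simp
      have "(L\<^sup>T *\<^sub>v z) $ i = (\<Sum>k\<in>{0..<r}. L$$(k,i) * z$k)"
        using i L_dim zc by (simp add: scalar_prod_def)
      also have "\<dots> = (\<Sum>k\<in>{0..<r}. L$$(k,i) / L$$(k,0) * w$k) - (\<Sum>k\<in>{0..<r}. L$$(k,i) / L$$(k,0) * wv j$k)"
        unfolding sum_subtractf[symmetric]
        by (rule sum.cong) (auto simp: z_def Lnz field_simps)
      also have "\<dots> = 0"
      proof (cases i)
        case 0
        have "(\<Sum>k\<in>{0..<r}. L$$(k,i) / L$$(k,0) * w$k) = (\<Sum>k<r. w$k)"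
          unfolding atLeast0LessThan[symmetric] 0
          by (rule sum.cong) (auto simp: Lnz)
        moreover have "(\<Sum>k\<in>{0..<r}. L$$(k,i) / L$$(k,0) * wv j$k) = (\<Sum>k<r. wv j$k)"
          unfolding atLeast0LessThan[symmetric] 0
          by (rule sum.cong) (auto simp: Lnz)
        ultimately show ?thesis using w(1) wv_simp[OF j] unfolding std_simplex_def by simp
      next
        case (Suc m)
        then have m: "m < r - 1" using i by simp
        show ?thesis using BTw[OF wc m] BTw[OF wvc m] w(2) wv_eq[OF j] Suc by simp
      qed
      finally show "(L\<^sup>T *\<^sub>v z) $ i = 0\<^sub>v r $ i" using i by simp
    qed
    have z0: "z = 0\<^sub>v r" by (rule invertible_transpose_kernel[OF L_dim L_inv zc Lz])
    show ?thesis
    proof (rule eq_vecI)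
      show "dim_vec w = dim_vec (wv j)" using wc wvc by simp
      fix k assume "k < dim_vec (wv j)"
      then have k: "k < r" using wvc by simp
      have "z $ k = 0" using z0 k by simp
      then show "w $ k = wv j $ k" using k Lpos[OF k] unfolding z_def by simp
    qed
  qed
  show ?thesis
  proof (intro conjI allI impI ballI)
    fix j assume j: "j < p"
    show "\<exists>!w. w \<in> std_simplex r \<and> row D j = B\<^sup>T *\<^sub>v w"
      using wv_simp[OF j] wv_eq[OF j] uniq[OF j] by blast
  next
    fix W :: "real mat" assume Wc: "W \<in> carrier_mat p r"
      and Wr: "\<forall>j<p. row W j \<in> std_simplex r \<and> row D j = B\<^sup>T *\<^sub>v row W j"
    have Went: "W$$(j,k) = V$$(j,k) * L$$(k,0) / c j" if "j < p" "k < r" for j k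
    proof -
      have "row W j \<in> std_simplex r" "row D j = B\<^sup>T *\<^sub>v row W j" using Wr that(1) by auto
      then have "row W j = wv j" by (rule uniq[OF that(1)])
      then have "row W j $ k = wv j $ k" by simp
      then show ?thesis using that Wc unfolding wv_def by simp
    qed
    have hc: "col H 0 \<in> carrier_vec p" using carrier_matD[OF Hc] by (intro carrier_vecI) simp
    have lc: "col L 0 \<in> carrier_vec r" using carrier_matD[OF L_dim] by (intro carrier_vecI) simp
    have S1: "diag_of_vec (map_vec sqrt \<pi>) * W = mat p r (\<lambda>(i,j). sqrt (\<pi>$i) * W$$(i,j))"
      using diag_mult[OF Wc, of "map_vec sqrt \<pi>"] pi_dim by (auto intro!: eq_matI)
    have "diag_of_vec (col H 0) * diag_of_vec (map_vec sqrt \<pi>) * W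
       = diag_of_vec (col H 0) * (diag_of_vec (map_vec sqrt \<pi>) * W)"
      by (rule assoc_mult_mat[of _ p p _ p _ r]) (use pi_dim Hc Wc in \<open>auto simp: diag_of_vec_def\<close>)
    also have "\<dots> = mat p r (\<lambda>(i,j). H$$(i,0) * (sqrt (\<pi>$i) * W$$(i,j)))"
      unfolding S1 diag_mult[OF mat_carrier hc] using Hc by (auto intro!: eq_matI)
    finally have L1: "diag_of_vec (col H 0) * diag_of_vec (map_vec sqrt \<pi>) * W
       = mat p r (\<lambda>(i,j). H$$(i,0) * (sqrt (\<pi>$i) * W$$(i,j)))" .
    have L2: "V * diag_of_vec (col L 0) = mat p r (\<lambda>(i,j). V$$(i,j) * L$$(j,0))"
      unfolding mult_diag[OF V_dim lc] using L_dim by (auto intro!: eq_matI)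
    show "diag_of_vec (col H 0) * diag_of_vec (map_vec sqrt \<pi>) * W = V * diag_of_vec (col L 0)"
      unfolding L1 L2
    proof (rule eq_matI)
      fix i k assume "i < dim_row (mat p r (\<lambda>(i,j). V$$(i,j) * L$$(j,0)))"
        "k < dim_col (mat p r (\<lambda>(i,j). V$$(i,j) * L$$(j,0)))"
      then have ik: "i < p" "k < r" by auto
      have "H$$(i,0) * sqrt (\<pi>$i) = c i"
        using H_entry[of i 0] ik sqpos[OF ik(1)] c_def by simp
      then have "H$$(i,0) * (sqrt (\<pi>$i) * W$$(i,k)) = c i * W$$(i,k)" by (simp add: mult.assoc[symmetric])
      also have "\<dots> = V$$(i,k) * L$$(k,0)" using Went[OF ik] cpos[OF ik(1)] by simp
      finally show "mat p r (\<lambda>(i,j). H$$(i,0) * (sqrt (\<pi>$i) * W$$(i,j))) $$ (i, k) =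
          mat p r (\<lambda>(i,j). V$$(i,j) * L$$(j,0)) $$ (i, k)" using ik by simp
    qed auto
  qed
qed

end
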